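(* Let $T:X\rightrightarrows X^*$ be a multivalued operator. Then $Z_{T^\rho}$ is a weakly closed convex subset of $X$, and $Z_{T^\mu}=Z_{T^\rho}$.
   Context: $X$ is a real Banach space with dual $X^*$ and pairing $\langle x,x^*\rangle=x^*(x)$. A multivalued operator $T:X\rightrightarrows X^*$ is identified with its graph $T\subset X\times X^*$, and $T(x)=\{x^*:(x,x^* )\in T\}$. The set of zeros of $T$ is $Z_T=\{x\in X: 0\in T(x)\}$. For $(x,x^* ),(y,y^* )\in X\times X^*$, write $(x,x^* )\sim_p(y,y^* )$ if either $\min\{\langle x-y,y^*\rangle,\langle y-x,x^*\rangle\}<0$ or $\langle x-y,y^*\rangle=\langle y-x,x^*\rangle=0$. The pseudomonotone polar of $T$ is $T^\rho=\{(x,x^* )\in X\times X^*: (x,x^* )\sim_p(y,y^* )\ \forall (y,y^* )\in T\}$. The monotone polar of $T$ is $T^\mu=\{(x,x^* )\in X\times X^*: \langle x-y,x^*-y^*\rangle\ge 0\ \forall (y,y^* )\in T\}$. *)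

theory Defs
  imports "HOL-Analysis.Analysis"
begin

text \<open>X is a real Banach space 'a::banach; its dual X* is the space of continuous
linear functionals (blinfun from 'a to real). Multivalued operators are identified with their graphs.\<close>

definition pairing :: "'a::real_normed_vector \<Rightarrow> ('a \<Rightarrow>\<^sub>L real) \<Rightarrow> real" where
  "pairing x xs = blinfun_apply xs x"

definition zeros :: "('a::real_normed_vector \<times> ('a \<Rightarrow>\<^sub>L real)) set \<Rightarrow> 'a set" where
  "zeros T = {x. (x, 0) \<in> T}"

definition sim_p :: "'a::real_normed_vector \<times> ('a \<Rightarrow>\<^sub>L real) \<Rightarrow> 'a \<times> ('a \<Rightarrow>\<^sub>L real) \<Rightarrow> bool" where
  "sim_p p q = (case p of (x, xs) \<Rightarrow> case q of (y, ys) \<Rightarrow>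
      min (pairing (x - y) ys) (pairing (y - x) xs) < 0
      \<or> (pairing (x - y) ys = 0 \<and> pairing (y - x) xs = 0))"

definition pseudomonotone_polar :: "('a::real_normed_vector \<times> ('a \<Rightarrow>\<^sub>L real)) set \<Rightarrow> ('a \<times> ('a \<Rightarrow>\<^sub>L real)) set" where
  "pseudomonotone_polar T = {p. \<forall>q\<in>T. sim_p p q}"

definition monotone_polar :: "('a::real_normed_vector \<times> ('a \<Rightarrow>\<^sub>L real)) set \<Rightarrow> ('a \<times> ('a \<Rightarrow>\<^sub>L real)) set" where
  "monotone_polar T = {(x, xs). \<forall>(y, ys)\<in>T. pairing (x - y) (xs - ys) \<ge> 0}"

definition weak_topology :: "('a::real_normed_vector) topology" where
  "weak_topology = topology_generated_by {{x. blinfun_apply f x \<in> U} | (f :: 'a \<Rightarrow>\<^sub>L real) (U :: real set). open U}"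

definition weakly_closed :: "('a::real_normed_vector) set \<Rightarrow> bool" where
  "weakly_closed S = closedin weak_topology S"

end

theory Submission
  imports Defs
begin

lemma zeros_rho:
  "zeros (pseudomonotone_polar T) = {x. \<forall>(y,ys)\<in>T. blinfun_apply ys x \<le> blinfun_apply ys y}"
  unfolding zeros_def pseudomonotone_polar_def sim_p_def pairing_def
  by (auto simp: blinfun.diff_right min_def split: if_splits prod.splits; force)

lemma zeros_mu:
  "zeros (monotone_polar T) = {x. \<forall>(y,ys)\<in>T. blinfun_apply ys x \<le> blinfun_apply ys y}"
  unfolding zeros_def monotone_polar_def pairing_def
  by (auto simp: blinfun.diff_right blinfun.diff_left)

lemma weak_topspace: "topspace (weak_topology :: 'a::real_normed_vector topology) = UNIV"
proof -
  have "UNIV \<in> {{x. blinfun_apply f x \<in> U} | (f :: 'a \<Rightarrow>\<^sub>L real) (U :: real set). open U}"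
    by (rule CollectI, rule exI[of _ 0], rule exI[of _ UNIV]) auto
  then show ?thesis unfolding weak_topology_def by auto
qed

lemma weak_open_halfspace:
  fixes f :: "'a::real_normed_vector \<Rightarrow>\<^sub>L real"
  shows "openin weak_topology {x::'a::real_normed_vector. c < blinfun_apply f x}"
proof -
  have "{x::'a. c < blinfun_apply f x} = {x. blinfun_apply f x \<in> {c<..}}" by auto
  moreover have "{x::'a. blinfun_apply f x \<in> {c<..}} \<in> {{x. blinfun_apply f x \<in> U} | (f :: 'a \<Rightarrow>\<^sub>L real) (U :: real set). open U}"
    unfolding mem_Collect_eq by (rule exI[where x=f], rule exI[where x="{c<..}"]) simp
  ultimately show ?thesis unfolding weak_topology_def
    by (simp add: topology_generated_by_Basis)
qed

theorem mainTheorem2: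
  fixes T :: "('a::banach \<times> ('a \<Rightarrow>\<^sub>L real)) set"
  shows "weakly_closed (zeros (pseudomonotone_polar T))
       \<and> convex (zeros (pseudomonotone_polar T))
       \<and> zeros (monotone_polar T) = zeros (pseudomonotone_polar T)"
proof (intro conjI)
  let ?S = "{x. \<forall>(y,ys)\<in>T. blinfun_apply ys x \<le> blinfun_apply ys y}"
  have eq: "UNIV - ?S = (\<Union>p\<in>T. {x. blinfun_apply (snd p) x \<in> {blinfun_apply (snd p) (fst p)<..}})"
    by (auto simp: not_le)
  have "openin weak_topology (UNIV - ?S)"
    unfolding eq by (intro openin_Union) (auto simp: weak_open_halfspace)
  then show "weakly_closed (zeros (pseudomonotone_polar T))"
    unfolding weakly_closed_def zeros_rho closedin_def weak_topspace by simp
  show "convex (zeros (pseudomonotone_polar T))"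
    unfolding zeros_rho convex_def
  proof (clarsimp)
    fix x y u v a b assume hx: "\<forall>(y,ys)\<in>T. blinfun_apply ys x \<le> blinfun_apply ys y"
      and hy: "\<forall>(y',ys)\<in>T. blinfun_apply ys y \<le> blinfun_apply ys y'"
      and u: "0 \<le> (u::real)" and v: "0 \<le> v" and uv: "u + v = 1" and ab: "(a,b) \<in> T"
    have 1: "blinfun_apply b x \<le> blinfun_apply b a" using hx ab by auto
    have 2: "blinfun_apply b y \<le> blinfun_apply b a" using hy ab by auto
    have "u * blinfun_apply b x + v * blinfun_apply b y \<le> u * blinfun_apply b a + v * blinfun_apply b a"
      by (intro add_mono mult_left_mono 1 2 u v)
    also have "\<dots> = blinfun_apply b a" using uv by (simp add: algebra_simps flip: distrib_right)
    finally show "blinfun_apply b (u *\<^sub>R x + v *\<^sub>R y) \<le> blinfun_apply b a"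
      by (simp add: blinfun.add_right blinfun.scaleR_right)
  qed
  show "zeros (monotone_polar T) = zeros (pseudomonotone_polar T)"
    unfolding zeros_rho zeros_mu ..
qed

end
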